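(* In the iPALM setting described in the context, let $\varepsilon\in(0,1)$, $\beta_0,\rho_0>0$, $\sigma>1$, and choose $\beta_k=\beta_0\sigma^k$, $\rho_k=\rho_0\sigma^{-k}$, $\bar\varepsilon_k=\min\{\bar\varepsilon,\sqrt{\rho_0/(20\sigma)}\,\sigma^{-k}\}$ with $\bar\varepsilon=\frac{\varepsilon(\sigma-1)}{8(\sigma+1)}\min\{1,\sqrt{\beta_0\rho_0}\}$. Let $D_0=\sqrt{\beta_0\rho_0\|x^{(0)}-x^*\|^2+\|\lambda^{(0)}-\lambda^*\|^2}$, let $K\ge1$ be an integer, and set $B_x=\frac{2\bar\varepsilon(\sigma^K-1)}{\rho_0(\sigma-1)}+\frac{D_0}{\sqrt{\beta_0\rho_0}}$ and $B_\lambda=\frac{2\bar\varepsilon\sqrt{\beta_0}(\sigma^K-1)}{\sqrt{\rho_0}(\sigma-1)}+D_0$. Then $\|x^{(k)}-x^*\|\le B_x$ and $\|\lambda^{(k)}-\lambda^*\|\le B_\lambda$ for all $0\le k\le K$, and $\|x_*^{(k+1)}-x^*\|\le B_x$ for all $0\le k<K$, where $x_*^{(k+1)}=\arg\min_x\Psi_k(x)$.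
   Context: iPALM setting. Consider $\min_x G(x):=f(x)+r(x)$ subject to $A_Ex=b_E$, $A_Ix\le b_I$, where $f:\mathbb R^n\to\mathbb R$ is convex, differentiable with $L_f$-Lipschitz gradient and $\mu$-strongly convex ($\mu\ge0$), and $r$ is proper closed convex. Write $A=[A_E;A_I]$, $b=[b_E;b_I]$, and multipliers $\lambda=[\lambda_E;\lambda_I]$. Assume $(x^*,\lambda^* )$ satisfies the KKT conditions $0\in\partial G(x^* )+A^\top\lambda^*$, $A_Ex^*=b_E$, $A_Ix^*\le b_I$, $\lambda_I^*\ge0$, $\langle\lambda_I^*,A_Ix^*-b_I\rangle=0$. The augmented Lagrangian is $\mathcal L_\beta(x,\lambda)=G(x)+\langle\lambda_E,A_Ex-b_E\rangle+\frac\beta2\|A_Ex-b_E\|^2+\frac1{2\beta}\big(\|[\beta(A_Ix-b_I)+\lambda_I]_+\|^2-\|\lambda_I\|^2\big)$, with $[\cdot]_+$ the componentwise positive part. Given $x^{(0)}\in\mathrm{dom}(G)$, $\lambda^{(0)}$, and positive numbers $\beta_k,\rho_k$ and $\bar\varepsilon_k\ge0$, the iPALM iterates satisfy for each $k\ge0$: with $\Psi_k(x)=\mathcal L_{\beta_k}(x,\lambda^{(k)})+\frac{\rho_k}2\|x-x^{(k)}\|^2$, the point $x^{(k+1)}$ is any point with $\mathrm{dist}(0,\partial\Psi_k(x^{(k+1)}))\le\bar\varepsilon_k$, and $\lambda_E^{(k+1)}=\lambda_E^{(k)}+\beta_k(A_Ex^{(k+1)}-b_E)$, $\lambda_I^{(k+1)}=[\lambda_I^{(k)}+\beta_k(A_Ix^{(k+1)}-b_I)]_+$.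 $\partial$ is the convex subdifferential and $\mathrm{dist}(0,S)=\inf_{s\in S}\|s\|$. *)

theory Defs
  imports "HOL-Analysis.Analysis"
begin

definition proper_fn :: "('a \<Rightarrow> ereal) \<Rightarrow> bool" where
  "proper_fn r \<longleftrightarrow> (\<forall>x. r x \<noteq> -\<infinity>) \<and> (\<exists>x. r x \<noteq> \<infinity>)"

definition convex_fn :: "('a::real_vector \<Rightarrow> ereal) \<Rightarrow> bool" where
  "convex_fn r \<longleftrightarrow> (\<forall>x y t. 0 \<le> t \<and> t \<le> 1 \<longrightarrow>
      r ((1 - t) *\<^sub>R x + t *\<^sub>R y) \<le> ereal (1 - t) * r x + ereal t * r y)"

text \<open>closed = lower semicontinuous = closed epigraph\<close>
definition closed_fn :: "('a::topological_space \<Rightarrow> ereal) \<Rightarrow> bool" where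
  "closed_fn r \<longleftrightarrow> closed {p :: 'a \<times> real. r (fst p) \<le> ereal (snd p)}"

definition effdom :: "('a \<Rightarrow> ereal) \<Rightarrow> 'a set" where
  "effdom r = {x. r x < \<infinity>}"

text \<open>convex subdifferential (empty outside the effective domain)\<close>
definition subdiff :: "('a::real_inner \<Rightarrow> ereal) \<Rightarrow> 'a \<Rightarrow> 'a set" where
  "subdiff G x = {g. \<bar>G x\<bar> \<noteq> \<infinity> \<and> (\<forall>y. G x + ereal (g \<bullet> (y - x)) \<le> G y)}"

text \<open>dist(0,S) = inf of norms, with inf of the empty set = +infinity\<close>
definition dist0 :: "'a::real_normed_vector set \<Rightarrow> ereal" where
  "dist0 S = (INF s\<in>S. ereal (norm s))"

definition pospart :: "real ^ 'p \<Rightarrow> real ^ 'p" where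
  "pospart v = (\<chi> i. max 0 (v $ i))"

definition auglag ::
  "(real ^ 'n \<Rightarrow> ereal) \<Rightarrow> real ^ 'n ^ 'm \<Rightarrow> real ^ 'm \<Rightarrow> real ^ 'n ^ 'p \<Rightarrow> real ^ 'p
    \<Rightarrow> real \<Rightarrow> real ^ 'n \<Rightarrow> real ^ 'm \<Rightarrow> real ^ 'p \<Rightarrow> ereal" where
  "auglag GG Ae be Ai bi bt x le li =
     GG x + ereal (le \<bullet> (Ae *v x - be) + bt / 2 * (norm (Ae *v x - be))\<^sup>2
       + 1 / (2 * bt) * ((norm (pospart (bt *\<^sub>R (Ai *v x - bi) + li)))\<^sup>2 - (norm li)\<^sup>2))"

end

theory Submission
  imports Defs
begin


lemma posq: "(max 0 (a+e::real))^2 \<le> (max 0 a)^2 + 2 * max 0 a * e + e^2"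
proof (cases "a \<ge> 0"; cases "a + e \<ge> 0")
  assume "\<not> a \<ge> 0" "a + e \<ge> 0" then show ?thesis by (simp add: max_def power2_eq_square) (smt (verit) mult_mono)
qed (use zero_le_square[of "a+e"] in \<open>auto simp: max_def power2_eq_square algebra_simps\<close>)

lemma normsq_vec: "(norm (v::real^'p))^2 = (\<Sum>i\<in>UNIV. (v$i)^2)"
  unfolding power2_norm_eq_inner inner_vec_def by (simp add: power2_eq_square)

lemma pospart_quad: "(norm (pospart (v + w)))^2 \<le> (norm (pospart v))^2 + 2 * (pospart v \<bullet> w) + (norm (w::real^'p))^2"
proof -
  have "(norm (pospart (v + w)))^2 = (\<Sum>i\<in>UNIV. (max 0 (v$i + w$i))^2)"
    by (simp add: normsq_vec pospart_def)
  also have "\<dots> \<le> (\<Sum>i\<in>UNIV. (max 0 (v$i))^2 + 2 * max 0 (v$i) * w$i + (w$i)^2)"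
    by (rule sum_mono) (rule posq)
  also have "\<dots> = (norm (pospart v))^2 + 2 * (pospart v \<bullet> w) + (norm w)^2"
    by (simp add: normsq_vec pospart_def inner_vec_def sum.distrib sum_distrib_left mult.assoc)
  finally show ?thesis .
qed

lemma inner_transp: "(transpose A *v v) \<bullet> (y::real^'n) = v \<bullet> (A *v y)"
  by (simp add: dot_lmul_matrix)

definition Sfun :: "real ^ 'n ^ 'm \<Rightarrow> real ^ 'm \<Rightarrow> real ^ 'n ^ 'p \<Rightarrow> real ^ 'p
    \<Rightarrow> real \<Rightarrow> real \<Rightarrow> real ^ 'n \<Rightarrow> real ^ 'm \<Rightarrow> real ^ 'p \<Rightarrow> real ^ 'n \<Rightarrow> real" where
 "Sfun Ae bE Ai bI bt rh x lE lI y = lE \<bullet> (Ae *v y - bE) + bt / 2 * (norm (Ae *v y - bE))\<^sup>2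
       + 1 / (2 * bt) * ((norm (pospart (bt *\<^sub>R (Ai *v y - bI) + lI)))\<^sup>2 - (norm lI)\<^sup>2)
       + rh / 2 * (norm (y - x))\<^sup>2"

lemma aug_eq: "auglag G Ae bE Ai bI bt y lE lI + ereal (rh / 2 * (norm (y - x))\<^sup>2)
   = G y + ereal (Sfun Ae bE Ai bI bt rh x lE lI y)"
  unfolding auglag_def Sfun_def by (simp add: add.assoc)

lemma nsq_add: "(norm (a + b :: 'a::real_inner))^2 = (norm a)^2 + 2 * (a \<bullet> b) + (norm b)^2"
  by (simp add: power2_norm_eq_inner inner_add inner_commute)

lemma S_expand:
  assumes bt: "bt > 0"
  shows "Sfun Ae bE Ai bI bt rh x lE lI (u + t *\<^sub>R d) \<le> Sfun Ae bE Ai bI bt rh x lE lI u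
     + t * ((lE + bt *\<^sub>R (Ae *v u - bE)) \<bullet> (Ae *v d) + pospart (bt *\<^sub>R (Ai *v u - bI) + lI) \<bullet> (Ai *v d)
            + rh * ((u - x) \<bullet> d))
     + t^2 * (bt / 2 * (norm (Ae *v d))\<^sup>2 + bt / 2 * (norm (Ai *v d))\<^sup>2 + rh / 2 * (norm d)\<^sup>2)"
proof -
  define w where "w = bt *\<^sub>R (Ai *v u - bI) + lI"
  have e1: "Ae *v (u + t *\<^sub>R d) - bE = (Ae *v u - bE) + t *\<^sub>R (Ae *v d)"
    by (simp add: algebra_simps)
  have e2: "bt *\<^sub>R (Ai *v (u + t *\<^sub>R d) - bI) + lI = w + (t * bt) *\<^sub>R (Ai *v d)"
    by (simp add: w_def algebra_simps)
  have e3: "u + t *\<^sub>R d - x = (u - x) + t *\<^sub>R d" by (simp add: algebra_simps)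
  have q: "(norm (pospart (w + (t * bt) *\<^sub>R (Ai *v d))))^2 \<le> (norm (pospart w))^2
       + 2 * (t * bt) * (pospart w \<bullet> (Ai *v d)) + (t*bt)^2 * (norm (Ai *v d))^2"
    using pospart_quad[of w "(t * bt) *\<^sub>R (Ai *v d)"] by (simp add: power_mult_distrib)
  have q2: "1 / (2 * bt) * (norm (pospart (w + (t * bt) *\<^sub>R (Ai *v d))))^2 \<le> 1 / (2 * bt) * ((norm (pospart w))^2
       + 2 * (t * bt) * (pospart w \<bullet> (Ai *v d)) + (t*bt)^2 * (norm (Ai *v d))^2)"
    using q bt by (intro mult_left_mono) auto
  have q3: "1 / (2 * bt) * ((norm (pospart w))^2
       + 2 * (t * bt) * (pospart w \<bullet> (Ai *v d)) + (t*bt)^2 * (norm (Ai *v d))^2)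
     = 1 / (2 * bt) * (norm (pospart w))^2 + t * (pospart w \<bullet> (Ai *v d)) + t^2 * (bt / 2 * (norm (Ai *v d))^2)"
    using bt by (simp add: field_simps power2_eq_square)
  show ?thesis
    unfolding Sfun_def e1 e2 e3 nsq_add
    using q2 q3 unfolding w_def[symmetric]
    by (simp add: inner_add inner_diff inner_scaleR_left inner_scaleR_right power2_eq_square algebra_simps)
qed

lemma lim0:
  fixes a b C :: real
  assumes "\<And>t. 0 < t \<Longrightarrow> t \<le> 1 \<Longrightarrow> a \<le> b + t * C"
  shows "a \<le> b"
proof (rule ccontr)
  assume "\<not> a \<le> b"
  then have ab: "a > b" by simp
  show False
  proof (cases "C \<le> 0")
    case True
    then show ?thesis using assms[of 1] ab by simp
  next
    case False
    define t where "t = min 1 ((a - b) / (2 * C))"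
    have t0: "0 < t" "t \<le> 1" using False ab by (auto simp: t_def)
    have "t * C \<le> (a - b) / (2 * C) * C" using False by (intro mult_right_mono) (auto simp: t_def)
    also have "\<dots> = (a - b) / 2" using False by simp
    finally show ?thesis using assms[OF t0] ab by simp
  qed
qed

lemma comp_ineq:
  fixes bt l a xa b ls :: real
  assumes "bt > 0" "xa - b \<le> 0" "ls \<ge> 0" "ls * (xa - b) = 0"
  shows "bt * ((max 0 (l + bt * (a - b)) - ls) * (xa - a)) + (max 0 (l + bt * (a - b)) - ls) * (max 0 (l + bt * (a - b)) - l) \<le> 0"
proof -
  define w where "w = l + bt * (a - b)"
  define p where "p = max 0 w"
  have xa: "xa - a = (xa - b) - (w - l) / bt" using assms(1) by (simp add: w_def field_simps)
  have "bt * ((p - ls) * (xa - a)) + (p - ls) * (p - l) = bt * p * (xa - b) - bt * (ls * (xa - b)) + p * (p - w) - ls * (p - w)"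
    unfolding xa using assms(1) by (simp add: field_simps)
  also have "\<dots> \<le> 0"
  proof -
    have "bt * p * (xa - b) \<le> 0" using assms by (intro mult_nonneg_nonpos) (auto simp: p_def)
    moreover have "p * (p - w) = 0" by (auto simp: p_def max_def)
    moreover have "ls * (p - w) \<ge> 0" using assms by (auto simp: p_def)
    moreover have "bt * (ls * (xa - b)) = 0" using assms(4) by simp
    ultimately show ?thesis by linarith
  qed
  finally show ?thesis by (simp add: p_def w_def)
qed

lemma vec_ineq:
  fixes Ai :: "real ^ 'n ^ 'p"
  assumes bt: "bt > 0" and ineq: "\<And>i. (Ai *v xs) $ i \<le> bI $ i" and mult: "\<And>i. lIs $ i \<ge> 0"
    and compl: "lIs \<bullet> (Ai *v xs - bI) = 0"
  shows "bt * ((pospart (lI + bt *\<^sub>R (Ai *v u - bI)) - lIs) \<bullet> (Ai *v xs - Ai *v u))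
     + (pospart (lI + bt *\<^sub>R (Ai *v u - bI)) - lIs) \<bullet> (pospart (lI + bt *\<^sub>R (Ai *v u - bI)) - lI) \<le> 0"
proof -
  have z: "lIs $ i * ((Ai *v xs) $ i - bI $ i) = 0" for i
  proof -
    have "(\<Sum>j\<in>UNIV. - (lIs $ j * ((Ai *v xs) $ j - bI $ j))) = 0"
      using compl by (simp add: inner_vec_def sum_negf)
    moreover have "\<forall>j\<in>UNIV. 0 \<le> - (lIs $ j * ((Ai *v xs) $ j - bI $ j))"
    proof
      fix j :: 'p
      have "lIs $ j * ((Ai *v xs) $ j - bI $ j) \<le> 0"
        using ineq[of j] mult[of j] by (intro mult_nonneg_nonpos) auto
      then show "0 \<le> - (lIs $ j * ((Ai *v xs) $ j - bI $ j))" by simp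
    qed
    ultimately have "\<forall>j\<in>UNIV. - (lIs $ j * ((Ai *v xs) $ j - bI $ j)) = 0"
      by (subst (asm) sum_nonneg_eq_0_iff) auto
    then show ?thesis by simp
  qed
  have "bt * ((pospart (lI + bt *\<^sub>R (Ai *v u - bI)) - lIs) \<bullet> (Ai *v xs - Ai *v u))
     + (pospart (lI + bt *\<^sub>R (Ai *v u - bI)) - lIs) \<bullet> (pospart (lI + bt *\<^sub>R (Ai *v u - bI)) - lI)
     = (\<Sum>i\<in>UNIV. bt * ((max 0 (lI$i + bt * ((Ai *v u)$i - bI$i)) - lIs$i) * ((Ai *v xs)$i - (Ai *v u)$i))
         + (max 0 (lI$i + bt * ((Ai *v u)$i - bI$i)) - lIs$i) * (max 0 (lI$i + bt * ((Ai *v u)$i - bI$i)) - lI$i))"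
    by (simp add: inner_vec_def pospart_def sum_distrib_left sum.distrib)
  also have "\<dots> \<le> 0"
    by (rule sum_nonpos) (rule comp_ineq[OF bt], use ineq mult z in auto)
  finally show ?thesis .
qed

lemma scal_fin:
  fixes bt G E I rh U Q :: real
  assumes "bt * (- G) \<le> bt * (- E + I + rh * (- U))" "bt * I + Q \<le> 0"
  shows "bt * E + Q + bt * rh * U \<le> bt * G"
  using assms by (simp add: algebra_simps)

lemma step:
  fixes f :: "real ^ 'n \<Rightarrow> real" and r :: "real ^ 'n \<Rightarrow> ereal"
    and Ae :: "real ^ 'n ^ 'm" and bE :: "real ^ 'm"
    and Ai :: "real ^ 'n ^ 'p" and bI :: "real ^ 'p"
    and xs :: "real ^ 'n" and lEs :: "real ^ 'm" and lIs :: "real ^ 'p"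
    and x u g :: "real ^ 'n" and lE :: "real ^ 'm" and lI :: "real ^ 'p"
  assumes fconv: "convex_on UNIV f" and rconv: "convex_fn r" and rnm: "\<And>y. r y \<noteq> -\<infinity>"
    and G_def: "G = (\<lambda>y. ereal (f y) + r y)"
    and kkt_sub: "- (transpose Ae *v lEs + transpose Ai *v lIs) \<in> subdiff G xs"
    and kkt_eq: "Ae *v xs = bE"
    and kkt_ineq: "\<And>i. (Ai *v xs) $ i \<le> bI $ i"
    and kkt_mult: "\<And>i. lIs $ i \<ge> 0"
    and kkt_compl: "lIs \<bullet> (Ai *v xs - bI) = 0"
    and bt: "bt > 0" and rh: "rh > 0"
    and gsub: "g \<in> subdiff (\<lambda>y. auglag G Ae bE Ai bI bt y lE lI + ereal (rh / 2 * (norm (y - x))\<^sup>2)) u"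
  shows "(lE + bt *\<^sub>R (Ae *v u - bE) - lEs) \<bullet> (bt *\<^sub>R (Ae *v u - bE))
     + (pospart (lI + bt *\<^sub>R (Ai *v u - bI)) - lIs) \<bullet> (pospart (lI + bt *\<^sub>R (Ai *v u - bI)) - lI)
     + bt * rh * ((u - x) \<bullet> (u - xs)) \<le> bt * (g \<bullet> (u - xs))"
proof -
  define S where "S = Sfun Ae bE Ai bI bt rh x lE lI"
  define gs where "gs = - (transpose Ae *v lEs + transpose Ai *v lIs)"
  define d where "d = xs - u"
  define L where "L = (lE + bt *\<^sub>R (Ae *v u - bE)) \<bullet> (Ae *v d) + pospart (bt *\<^sub>R (Ai *v u - bI) + lI) \<bullet> (Ai *v d)
            + rh * ((u - x) \<bullet> d)"
  define C where "C = bt / 2 * (norm (Ae *v d))\<^sup>2 + bt / 2 * (norm (Ai *v d))\<^sup>2 + rh / 2 * (norm d)\<^sup>2"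
  have gs: "\<bar>G u + ereal (S u)\<bar> \<noteq> \<infinity>" "\<And>y. G u + ereal (S u) + ereal (g \<bullet> (y - u)) \<le> G y + ereal (S y)"
    using gsub unfolding subdiff_def aug_eq S_def by auto
  obtain ru where ru: "r u = ereal ru"
    using gs(1) rnm[of u] unfolding G_def by (cases "r u") auto
  have ks: "\<bar>G xs\<bar> \<noteq> \<infinity>" "\<And>y. G xs + ereal (gs \<bullet> (y - xs)) \<le> G y"
    using kkt_sub unfolding subdiff_def gs_def by auto
  obtain rxs where rxs: "r xs = ereal rxs"
    using ks(1) rnm[of xs] unfolding G_def by (cases "r xs") auto
  have kk: "f xs + rxs + gs \<bullet> (u - xs) \<le> f u + ru"
    using ks(2)[of u] unfolding G_def ru rxs by simp
  have main: "g \<bullet> d \<le> (f xs + rxs - f u - ru) + L + t * C" if t: "0 < t" "t \<le> 1" for t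
  proof -
    define yt where "yt = u + t *\<^sub>R d"
    have yt: "yt = (1 - t) *\<^sub>R u + t *\<^sub>R xs" by (simp add: yt_def d_def algebra_simps)
    have fc: "f yt \<le> (1 - t) * f u + t * f xs"
      unfolding yt using t by (intro convex_onD[OF fconv]) auto
    have "r yt \<le> ereal (1 - t) * r u + ereal t * r xs"
      unfolding yt using rconv t unfolding convex_fn_def by auto
    then have rc: "r yt \<le> ereal ((1 - t) * ru + t * rxs)" by (simp add: ru rxs)
    have "ereal (f u + ru + S u + t * (g \<bullet> d)) \<le> G yt + ereal (S yt)"
      using gs(2)[of yt] unfolding G_def ru by (simp add: yt_def)
    also have "\<dots> \<le> ereal (f yt) + ereal ((1 - t) * ru + t * rxs) + ereal (S yt)"
      unfolding G_def using rc by (intro add_right_mono add_left_mono)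
    finally have "f u + ru + S u + t * (g \<bullet> d) \<le> f yt + ((1 - t) * ru + t * rxs) + S yt" by simp
    moreover have "S yt \<le> S u + t * L + t^2 * C"
      unfolding S_def yt_def L_def C_def by (rule S_expand[OF bt])
    ultimately have "t * (g \<bullet> d) \<le> t * ((f xs + rxs - f u - ru) + L + t * C)"
      using fc by (simp add: algebra_simps power2_eq_square)
    then show ?thesis using t by simp
  qed
  have m: "g \<bullet> d \<le> (f xs + rxs - f u - ru) + L"
    by (rule lim0[of _ _ C]) (use main in auto)
  have gsd: "gs \<bullet> (u - xs) = lEs \<bullet> (Ae *v d) + lIs \<bullet> (Ai *v d)"
  proof -
    have "u - xs = - d" by (simp add: d_def)
    then show ?thesis unfolding gs_def by (simp only: inner_minus_right inner_minus_left minus_minus inner_add_left inner_transp)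
  qed
  have m2: "g \<bullet> d \<le> (lE + bt *\<^sub>R (Ae *v u - bE) - lEs) \<bullet> (Ae *v d)
     + (pospart (lI + bt *\<^sub>R (Ai *v u - bI)) - lIs) \<bullet> (Ai *v d) + rh * ((u - x) \<bullet> d)"
  proof -
    have pp: "pospart (bt *\<^sub>R (Ai *v u - bI) + lI) = pospart (lI + bt *\<^sub>R (Ai *v u - bI))"
      by (simp add: add.commute)
    show ?thesis using m kk gsd unfolding L_def pp inner_diff_left by linarith
  qed
  have aed: "Ae *v d = - (Ae *v u - bE)" by (simp add: d_def kkt_eq algebra_simps)
  have aid: "Ai *v d = Ai *v xs - Ai *v u" by (simp add: d_def algebra_simps)
  have vi: "bt * ((pospart (lI + bt *\<^sub>R (Ai *v u - bI)) - lIs) \<bullet> (Ai *v xs - Ai *v u))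
     + (pospart (lI + bt *\<^sub>R (Ai *v u - bI)) - lIs) \<bullet> (pospart (lI + bt *\<^sub>R (Ai *v u - bI)) - lI) \<le> 0"
    by (rule vec_ineq[OF bt kkt_ineq kkt_mult kkt_compl])
  have H: "bt * (g \<bullet> d) \<le> bt * ((lE + bt *\<^sub>R (Ae *v u - bE) - lEs) \<bullet> (Ae *v d)
     + (pospart (lI + bt *\<^sub>R (Ai *v u - bI)) - lIs) \<bullet> (Ai *v d) + rh * ((u - x) \<bullet> d))"
    using bt by (intro mult_left_mono[OF m2]) simp
  then show ?thesis
  proof -
    have e1: "g \<bullet> d = - (g \<bullet> (u - xs))" "(u - x) \<bullet> d = - ((u - x) \<bullet> (u - xs))"
      by (simp_all add: d_def inner_diff_right)
    have e2: "(lE + bt *\<^sub>R (Ae *v u - bE) - lEs) \<bullet> (bt *\<^sub>R (Ae *v u - bE)) = bt * ((lE + bt *\<^sub>R (Ae *v u - bE) - lEs) \<bullet> (Ae *v u - bE))"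
      by simp
    show ?thesis using H vi unfolding aed aid e1 e2 inner_minus_right
      by (rule scal_fin)
  qed
qed

lemma polar: "2 * ((p - q) \<bullet> (p - r)) = (norm (p - q))\<^sup>2 + (norm (p - r))\<^sup>2 - (norm (r - q :: 'a::real_inner))\<^sup>2"
  by (simp add: power2_norm_eq_inner inner_diff_left inner_diff_right inner_commute algebra_simps)

lemma quad_root:
  fixes P D a :: real
  assumes "P \<ge> 0" "D \<ge> 0" "a \<ge> 0" "P^2 \<le> D^2 + a * P"
  shows "P \<le> D + a"
proof (rule ccontr)
  assume "\<not> P \<le> D + a"
  then have h: "P > D + a" by simp
  have "P * P > P * (D + a)" using h assms by (intro mult_strict_left_mono) auto
  moreover have "P * D \<ge> D * D" using h assms by (intro mult_right_mono) auto
  ultimately show False using assms(4) by (simp add: power2_eq_square algebra_simps)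
qed

lemma Dstep:
  fixes u x xs g :: "'a::real_inner" and lE lE' lEs :: "'b::real_inner" and lI lI' lIs :: "'c::real_inner"
  assumes H: "(lE' - lEs) \<bullet> (lE' - lE) + (lI' - lIs) \<bullet> (lI' - lI) + c * ((u - x) \<bullet> (u - xs)) \<le> bt * (g \<bullet> (u - xs))"
    and c: "c > 0" and bt: "bt > 0" and g: "norm g \<le> e"
  shows "sqrt (c * (norm (u - xs))\<^sup>2 + (norm (lE' - lEs))\<^sup>2 + (norm (lI' - lIs))\<^sup>2)
     \<le> sqrt (c * (norm (x - xs))\<^sup>2 + (norm (lE - lEs))\<^sup>2 + (norm (lI - lIs))\<^sup>2) + 2 * bt * e / sqrt c"
proof -
  define P where "P = sqrt (c * (norm (u - xs))\<^sup>2 + (norm (lE' - lEs))\<^sup>2 + (norm (lI' - lIs))\<^sup>2)"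
  define D where "D = sqrt (c * (norm (x - xs))\<^sup>2 + (norm (lE - lEs))\<^sup>2 + (norm (lI - lIs))\<^sup>2)"
  define a where "a = 2 * bt * e / sqrt c"
  have e0: "e \<ge> 0" using g norm_ge_zero order_trans by blast
  have P2: "P^2 = c * (norm (u - xs))\<^sup>2 + (norm (lE' - lEs))\<^sup>2 + (norm (lI' - lIs))\<^sup>2"
    unfolding P_def using c by (intro real_sqrt_pow2) auto
  have D2: "D^2 = c * (norm (x - xs))\<^sup>2 + (norm (lE - lEs))\<^sup>2 + (norm (lI - lIs))\<^sup>2"
    unfolding D_def using c by (intro real_sqrt_pow2) auto
  have p1: "2 * ((lE' - lEs) \<bullet> (lE' - lE)) \<ge> (norm (lE' - lEs))\<^sup>2 - (norm (lE - lEs))\<^sup>2"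
    using polar[of lE' lEs lE] by simp
  have p2: "2 * ((lI' - lIs) \<bullet> (lI' - lI)) \<ge> (norm (lI' - lIs))\<^sup>2 - (norm (lI - lIs))\<^sup>2"
    using polar[of lI' lIs lI] by simp
  have p3: "2 * ((u - xs) \<bullet> (u - x)) \<ge> (norm (u - xs))\<^sup>2 - (norm (x - xs))\<^sup>2"
    using polar[of u xs x] by simp
  have p3': "2 * c * ((u - x) \<bullet> (u - xs)) \<ge> c * (norm (u - xs))\<^sup>2 - c * (norm (x - xs))\<^sup>2"
    using mult_left_mono[OF p3, of c] c by (simp add: inner_commute algebra_simps)
  have gb: "g \<bullet> (u - xs) \<le> e * norm (u - xs)"
  proof -
    have "g \<bullet> (u - xs) \<le> norm g * norm (u - xs)" by (rule norm_cauchy_schwarz)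
    also have "\<dots> \<le> e * norm (u - xs)" using g by (intro mult_right_mono) auto
    finally show ?thesis .
  qed
  have "bt * (g \<bullet> (u - xs)) \<le> bt * (e * norm (u - xs))" using gb bt by simp
  then have P2le: "P^2 \<le> D^2 + 2 * bt * e * norm (u - xs)"
    unfolding P2 D2 using H p1 p2 p3' by (simp add: algebra_simps)
  have sc: "sqrt c * norm (u - xs) \<le> P"
  proof -
    have "sqrt c * norm (u - xs) = sqrt (c * (norm (u - xs))\<^sup>2)" using c by (simp add: real_sqrt_mult)
    also have "\<dots> \<le> P" unfolding P_def by (rule real_sqrt_le_mono) simp
    finally show ?thesis .
  qed
  have "2 * bt * e * norm (u - xs) = a * (sqrt c * norm (u - xs))" using c by (simp add: a_def)
  also have "\<dots> \<le> a * P" using sc e0 bt c by (intro mult_left_mono) (auto simp: a_def)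
  finally have "P^2 \<le> D^2 + a * P" using P2le by simp
  moreover have "P \<ge> 0" "D \<ge> 0" "a \<ge> 0" using e0 bt c by (auto simp: P_def D_def a_def)
  ultimately have "P \<le> D + a" using quad_root by blast
  then show ?thesis by (simp add: P_def D_def a_def)
qed


lemma sq_conv: "convex_on UNIV (\<lambda>y::'a::real_inner. (norm y)\<^sup>2)"
proof (rule convex_onI)
  fix t :: real and x y :: 'a
  have "(norm ((1 - t) *\<^sub>R x + t *\<^sub>R y))\<^sup>2 = (1 - t) * (norm x)\<^sup>2 + t * (norm y)\<^sup>2 - t * (1 - t) * (norm (x - y))\<^sup>2"
    by (simp add: power2_norm_eq_inner inner_add_left inner_add_right inner_diff_left inner_diff_right inner_commute algebra_simps)
  moreover assume "t > 0" "t < 1"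
  ultimately show "(norm ((1 - t) *\<^sub>R x + t *\<^sub>R y))\<^sup>2 \<le> (1 - t) * (norm x)\<^sup>2 + t * (norm y)\<^sup>2" by simp
qed simp

theorem lemma5p6:
  fixes f :: "real ^ 'n \<Rightarrow> real" and gradf :: "real ^ 'n \<Rightarrow> real ^ 'n"
    and r :: "real ^ 'n \<Rightarrow> ereal"
    and Lf \<mu> :: real
    and Ae :: "real ^ 'n ^ 'm" and bE :: "real ^ 'm"
    and Ai :: "real ^ 'n ^ 'p" and bI :: "real ^ 'p"
    and xs :: "real ^ 'n" and lEs :: "real ^ 'm" and lIs :: "real ^ 'p"
    and x :: "nat \<Rightarrow> real ^ 'n" and lE :: "nat \<Rightarrow> real ^ 'm" and lI :: "nat \<Rightarrow> real ^ 'p"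
    and \<epsilon> \<beta>0 \<rho>0 \<sigma> :: real and K :: nat
    and G :: "real ^ 'n \<Rightarrow> ereal"
    and \<beta> \<rho> epsk :: "nat \<Rightarrow> real" and epsbar D0 Bx Bl :: real
  assumes f_diff: "\<And>y. (f has_derivative (\<lambda>h. gradf y \<bullet> h)) (at y)"
    and f_lip: "\<And>y z. norm (gradf y - gradf z) \<le> Lf * norm (y - z)"
    and mu_nonneg: "\<mu> \<ge> 0"
    and f_strong: "convex_on UNIV (\<lambda>y. f y - \<mu> / 2 * (norm y)\<^sup>2)"
    and r_proper: "proper_fn r" and r_closed: "closed_fn r" and r_convex: "convex_fn r"
    and G_def: "G = (\<lambda>y. ereal (f y) + r y)"
    and kkt_sub: "- (transpose Ae *v lEs + transpose Ai *v lIs) \<in> subdiff G xs"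
    and kkt_eq: "Ae *v xs = bE"
    and kkt_ineq: "\<And>i. (Ai *v xs) $ i \<le> bI $ i"
    and kkt_mult: "\<And>i. lIs $ i \<ge> 0"
    and kkt_compl: "lIs \<bullet> (Ai *v xs - bI) = 0"
    and eps: "0 < \<epsilon>" "\<epsilon> < 1"
    and pos: "\<beta>0 > 0" "\<rho>0 > 0" "\<sigma> > 1"
    and beta_def: "\<beta> = (\<lambda>k. \<beta>0 * \<sigma> ^ k)"
    and rho_def: "\<rho> = (\<lambda>k. \<rho>0 / \<sigma> ^ k)"
    and epsbar_def: "epsbar = \<epsilon> * (\<sigma> - 1) / (8 * (\<sigma> + 1)) * min 1 (sqrt (\<beta>0 * \<rho>0))"
    and epsk_def: "epsk = (\<lambda>k. min epsbar (sqrt (\<rho>0 / (20 * \<sigma>)) / \<sigma> ^ k))"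
    and x0_dom: "x 0 \<in> effdom G"
    and x_step: "\<And>k. dist0 (subdiff (\<lambda>y. auglag G Ae bE Ai bI (\<beta> k) y (lE k) (lI k)
                         + ereal (\<rho> k / 2 * (norm (y - x k))\<^sup>2)) (x (Suc k))) \<le> ereal (epsk k)"
    and lE_step: "\<And>k. lE (Suc k) = lE k + \<beta> k *\<^sub>R (Ae *v x (Suc k) - bE)"
    and lI_step: "\<And>k. lI (Suc k) = pospart (lI k + \<beta> k *\<^sub>R (Ai *v x (Suc k) - bI))"
    and D0_def: "D0 = sqrt (\<beta>0 * \<rho>0 * (norm (x 0 - xs))\<^sup>2
                     + (norm (lE 0 - lEs))\<^sup>2 + (norm (lI 0 - lIs))\<^sup>2)"
    and K_ge: "K \<ge> 1"
    and Bx_def: "Bx = 2 * epsbar * (\<sigma> ^ K - 1) / (\<rho>0 * (\<sigma> - 1)) + D0 / sqrt (\<beta>0 * \<rho>0)"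
    and Bl_def: "Bl = 2 * epsbar * sqrt \<beta>0 * (\<sigma> ^ K - 1) / (sqrt \<rho>0 * (\<sigma> - 1)) + D0"
  shows "(\<forall>k\<le>K. norm (x k - xs) \<le> Bx
            \<and> sqrt ((norm (lE k - lEs))\<^sup>2 + (norm (lI k - lIs))\<^sup>2) \<le> Bl)
       \<and> (\<forall>k<K. \<forall>z. (\<forall>y. auglag G Ae bE Ai bI (\<beta> k) z (lE k) (lI k)
                           + ereal (\<rho> k / 2 * (norm (z - x k))\<^sup>2)
                        \<le> auglag G Ae bE Ai bI (\<beta> k) y (lE k) (lI k)
                           + ereal (\<rho> k / 2 * (norm (y - x k))\<^sup>2))
                 \<longrightarrow> norm (z - xs) \<le> Bx)"
proof -
  define c where "c = \<beta>0 * \<rho>0"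
  have c0: "c > 0" using pos by (simp add: c_def)
  have bpos: "\<beta> k > 0" for k using pos by (simp add: beta_def)
  have rpos: "\<rho> k > 0" for k using pos by (simp add: rho_def)
  have bc: "\<beta> k * \<rho> k = c" for k using pos by (simp add: beta_def rho_def c_def)
  have rnm: "\<And>y. r y \<noteq> -\<infinity>" using r_proper unfolding proper_fn_def by auto
  have sqconv: "convex_on UNIV (\<lambda>y::real^'n. \<mu> / 2 * (norm y)\<^sup>2)"
    using mu_nonneg by (intro convex_on_cmul sq_conv) auto
  have "convex_on UNIV (\<lambda>y. (f y - \<mu> / 2 * (norm y)\<^sup>2) + \<mu> / 2 * (norm y)\<^sup>2)"
    by (rule convex_on_add[OF f_strong sqconv])
  then have fconv: "convex_on UNIV f" by simp
  have eb0: "epsbar \<ge> 0" unfolding epsbar_def using eps pos by (intro mult_nonneg_nonneg) auto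
  define Dk where "Dk k = sqrt (c * (norm (x k - xs))\<^sup>2 + (norm (lE k - lEs))\<^sup>2 + (norm (lI k - lIs))\<^sup>2)" for k
  define \<gamma> where "\<gamma> = 2 * epsbar * sqrt \<beta>0 / sqrt \<rho>0"
  have g0: "\<gamma> \<ge> 0" using eb0 pos by (simp add: \<gamma>_def)
  have bfac2: "2 * \<beta> k * e / sqrt c \<le> \<gamma> * \<sigma> ^ k" if "e \<le> epsbar" for k e
  proof -
    have sc: "sqrt c = sqrt \<beta>0 * sqrt \<rho>0" by (simp add: c_def real_sqrt_mult)
    have b: "\<beta>0 = sqrt \<beta>0 * sqrt \<beta>0" using pos by simp
    have "2 * \<beta> k * e / sqrt c = 2 * e * sqrt \<beta>0 / sqrt \<rho>0 * \<sigma> ^ k"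
      unfolding sc beta_def using pos by (subst b) (simp add: field_simps)
    also have "\<dots> \<le> \<gamma> * \<sigma> ^ k" unfolding \<gamma>_def using that pos
      by (intro mult_right_mono divide_right_mono mult_right_mono) auto
    finally show ?thesis .
  qed
  have Psi: "\<And>k. \<And>g u. g \<in> subdiff (\<lambda>y. auglag G Ae bE Ai bI (\<beta> k) y (lE k) (lI k)
                         + ereal (\<rho> k / 2 * (norm (y - x k))\<^sup>2)) u \<Longrightarrow> norm g \<le> e \<Longrightarrow>
     sqrt (c * (norm (u - xs))\<^sup>2 + (norm (lE k + \<beta> k *\<^sub>R (Ae *v u - bE) - lEs))\<^sup>2
        + (norm (pospart (lI k + \<beta> k *\<^sub>R (Ai *v u - bI)) - lIs))\<^sup>2) \<le> Dk k + 2 * \<beta> k * e / sqrt c" for e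
  proof -
    fix k g u
    assume gs: "g \<in> subdiff (\<lambda>y. auglag G Ae bE Ai bI (\<beta> k) y (lE k) (lI k)
                         + ereal (\<rho> k / 2 * (norm (y - x k))\<^sup>2)) u" and ng: "norm g \<le> e"
    have H: "(lE k + \<beta> k *\<^sub>R (Ae *v u - bE) - lEs) \<bullet> (\<beta> k *\<^sub>R (Ae *v u - bE))
     + (pospart (lI k + \<beta> k *\<^sub>R (Ai *v u - bI)) - lIs) \<bullet> (pospart (lI k + \<beta> k *\<^sub>R (Ai *v u - bI)) - lI k)
     + \<beta> k * \<rho> k * ((u - x k) \<bullet> (u - xs)) \<le> \<beta> k * (g \<bullet> (u - xs))"
      by (rule step[OF fconv r_convex rnm G_def kkt_sub kkt_eq kkt_ineq kkt_mult kkt_compl bpos rpos gs])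
    have e: "\<beta> k *\<^sub>R (Ae *v u - bE) = lE k + \<beta> k *\<^sub>R (Ae *v u - bE) - lE k" by simp
    show "sqrt (c * (norm (u - xs))\<^sup>2 + (norm (lE k + \<beta> k *\<^sub>R (Ae *v u - bE) - lEs))\<^sup>2
        + (norm (pospart (lI k + \<beta> k *\<^sub>R (Ai *v u - bI)) - lIs))\<^sup>2) \<le> Dk k + 2 * \<beta> k * e / sqrt c"
      unfolding Dk_def
      by (rule Dstep[OF _ c0 bpos ng]) (use H in \<open>simp only: bc e[symmetric]\<close>)
  qed
  have Drec: "Dk (Suc k) \<le> Dk k + \<gamma> * \<sigma> ^ k" for k
  proof -
    have h: "Dk (Suc k) \<le> Dk k + 2 * \<beta> k * (epsk k + \<delta>) / sqrt c" if d: "\<delta> > 0" for \<delta>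
    proof -
      have "dist0 (subdiff (\<lambda>y. auglag G Ae bE Ai bI (\<beta> k) y (lE k) (lI k)
                         + ereal (\<rho> k / 2 * (norm (y - x k))\<^sup>2)) (x (Suc k))) < ereal (epsk k + \<delta>)"
        by (rule le_less_trans[OF x_step[of k]]) (use d in simp)
      then obtain g where gs: "g \<in> subdiff (\<lambda>y. auglag G Ae bE Ai bI (\<beta> k) y (lE k) (lI k)
                         + ereal (\<rho> k / 2 * (norm (y - x k))\<^sup>2)) (x (Suc k))" and ng: "norm g < epsk k + \<delta>"
        unfolding dist0_def INF_less_iff by auto
      show ?thesis using Psi[OF gs, of "epsk k + \<delta>"] ng
        by (simp add: Dk_def lE_step lI_step)
    qed
    have "Dk (Suc k) \<le> Dk k + 2 * \<beta> k * epsk k / sqrt c"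
    proof (rule field_le_epsilon)
      fix e :: real assume e: "e > 0"
      have "Dk (Suc k) \<le> Dk k + 2 * \<beta> k * (epsk k + e * sqrt c / (2 * \<beta> k)) / sqrt c"
        using e c0 bpos[of k] by (intro h) auto
      also have "\<dots> = Dk k + 2 * \<beta> k * epsk k / sqrt c + e"
        using c0 bpos[of k] by (simp add: field_simps)
      finally show "Dk (Suc k) \<le> Dk k + 2 * \<beta> k * epsk k / sqrt c + e" .
    qed
    also have "\<dots> \<le> Dk k + \<gamma> * \<sigma> ^ k"
      using bfac2[of "epsk k" k] by (simp add: epsk_def)
    finally show ?thesis .
  qed
  have Dind: "Dk k \<le> D0 + \<gamma> * (\<Sum>j<k. \<sigma> ^ j)" for k
  proof (induction k)
    case 0 then show ?case by (simp add: Dk_def D0_def c_def)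
  next
    case (Suc k) then show ?case using Drec[of k] by (simp add: distrib_left)
  qed
  have geo: "(\<Sum>j<K. \<sigma> ^ j) = (\<sigma> ^ K - 1) / (\<sigma> - 1)"
    using pos by (simp add: geometric_sum)
  have Bl_eq: "Bl = D0 + \<gamma> * (\<Sum>j<K. \<sigma> ^ j)"
    unfolding Bl_def geo \<gamma>_def by (simp add: field_simps)
  have Bx_eq: "Bx = Bl / sqrt c"
  proof -
    have sc: "sqrt c = sqrt \<beta>0 * sqrt \<rho>0" by (simp add: c_def real_sqrt_mult)
    have r: "\<rho>0 = sqrt \<rho>0 * sqrt \<rho>0" using pos by simp
    show ?thesis unfolding Bx_def Bl_def sc using pos
      by (subst (1) r) (simp add: field_simps c_def real_sqrt_mult)
  qed
  have Dle: "Dk k \<le> Bl" if "k \<le> K" for k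
  proof -
    have "(\<Sum>j<k. \<sigma> ^ j) \<le> (\<Sum>j<K. \<sigma> ^ j)"
      using that pos by (intro sum_mono2) auto
    then show ?thesis using Dind[of k] g0 unfolding Bl_eq
      by (meson add_left_mono mult_left_mono order_trans)
  qed
  have xbound: "norm (u - xs) \<le> Bx"
    if "sqrt (c * (norm (u - xs))\<^sup>2 + a) \<le> Bl" "a \<ge> 0" for u :: "real^'n" and a
  proof -
    have "sqrt c * norm (u - xs) = sqrt (c * (norm (u - xs))\<^sup>2)" using c0 by (simp add: real_sqrt_mult)
    also have "\<dots> \<le> sqrt (c * (norm (u - xs))\<^sup>2 + a)" using that by (intro real_sqrt_le_mono) simp
    finally have "sqrt c * norm (u - xs) \<le> Bl" using that by simp
    then show ?thesis unfolding Bx_eq using c0 by (simp add: field_simps mult.commute)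
  qed
  show ?thesis
  proof (intro conjI allI impI)
    fix k assume k: "k \<le> K"
    show "norm (x k - xs) \<le> Bx"
      by (rule xbound[of _ "(norm (lE k - lEs))\<^sup>2 + (norm (lI k - lIs))\<^sup>2"])
         (use Dle[OF k] in \<open>auto simp: Dk_def add.assoc\<close>)
    have "sqrt ((norm (lE k - lEs))\<^sup>2 + (norm (lI k - lIs))\<^sup>2) \<le> Dk k"
      unfolding Dk_def using c0 by (intro real_sqrt_le_mono) auto
    then show "sqrt ((norm (lE k - lEs))\<^sup>2 + (norm (lI k - lIs))\<^sup>2) \<le> Bl" using Dle[OF k] by simp
  next
    fix k z assume k: "k < K"
    define Psi where "Psi = (\<lambda>y. auglag G Ae bE Ai bI (\<beta> k) y (lE k) (lI k) + ereal (\<rho> k / 2 * (norm (y - x k))\<^sup>2))"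
    assume mn: "\<forall>y. auglag G Ae bE Ai bI (\<beta> k) z (lE k) (lI k) + ereal (\<rho> k / 2 * (norm (z - x k))\<^sup>2)
                  \<le> auglag G Ae bE Ai bI (\<beta> k) y (lE k) (lI k) + ereal (\<rho> k / 2 * (norm (y - x k))\<^sup>2)"
    then have mn': "\<And>y. Psi z \<le> Psi y" unfolding Psi_def by blast
    have fin0: "Psi (x 0) < \<infinity>"
      using x0_dom unfolding Psi_def aug_eq effdom_def by simp
    have fin1: "Psi z \<noteq> -\<infinity>"
      using rnm[of z] unfolding Psi_def aug_eq G_def by (cases "r z") auto
    have "0 \<in> subdiff Psi z"
      unfolding subdiff_def using mn' fin1 order.strict_trans1[OF mn'[of "x 0"] fin0] by auto
    then have "sqrt (c * (norm (z - xs))\<^sup>2 + (norm (lE k + \<beta> k *\<^sub>R (Ae *v z - bE) - lEs))\<^sup>2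
        + (norm (pospart (lI k + \<beta> k *\<^sub>R (Ai *v z - bI)) - lIs))\<^sup>2) \<le> Dk k + 2 * \<beta> k * 0 / sqrt c"
      unfolding Psi_def by (rule Psi) simp
    then have "sqrt (c * (norm (z - xs))\<^sup>2 + ((norm (lE k + \<beta> k *\<^sub>R (Ae *v z - bE) - lEs))\<^sup>2
        + (norm (pospart (lI k + \<beta> k *\<^sub>R (Ai *v z - bI)) - lIs))\<^sup>2)) \<le> Bl"
      using Dle[of k] k by (simp add: add.assoc)
    then show "norm (z - xs) \<le> Bx" by (rule xbound) simp
  qed
qed

end
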